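(* Let $\mathcal T$ be a tube, let $\phi=\{M_1,\dots,M_n\}$ be a brick set in $\mathcal T$, and let $C=(\dim\mathrm{Ext}^1_{\mathcal T}(M_i,M_j))_{i,j}$ be its adjacency matrix. If $C$ is irreducible, then there is a permutation matrix $P$ such that $P^TCP$ is the $n\times n$ cyclic matrix whose entries are $1$ at positions $(i,i+1)$ for $1\le i\le n-1$ and at $(n,1)$, and $0$ elsewhere (for $n=1$ this is the matrix $(1)$).
   Context: $\Bbbk$ is algebraically closed. A tube (of rank $r\ge1$) is the $\Bbbk$-linear abelian category of finite-dimensional nilpotent representations of the quiver with $r$ vertices forming an oriented cycle (for $r=1$, one vertex with one loop); it is a uniserial hereditary category with Auslander–Reiten translation $\tau$ and Serre duality $\mathrm{Ext}^1(X,Y)\cong D\mathrm{Hom}(Y,\tau X)$. A brick is an object $M$ with $\mathrm{Hom}(M,M)=\Bbbk$; a brick set is a finite set of bricks $\{M_1,\dots,M_n\}$ with $\dim\mathrm{Hom}(M_i,M_j)=\delta_{ij}$. An $n\times n$ matrix $C$ is reducible if either $n\ge2$ and there is a permutation matrix $P$ with $P^TCP=\begin{pmatrix}C_1&C_2\\0&C_3\end{pmatrix}$ with $C_1,C_3$ square of positive size, or $n=1$ and $C=0$; otherwise $C$ is irreducible. *)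

theory Defs
  imports "Jordan_Normal_Form.Matrix" "HOL-Computational_Algebra.Polynomial"
          "HOL-Library.Function_Algebras"
begin

text \<open>The cyclic quiver of rank r has vertices 0,...,r-1 and arrows i -> (i+1) mod r
  (for r = 1 a single loop).  A representation is a pair (d, A): d i is the dimension
  of the space k^(d i) at vertex i, and A i is the (d((i+1) mod r) x d i)-matrix
  of the arrow starting at i.\<close>

type_synonym 'k rep = "(nat \<Rightarrow> nat) \<times> (nat \<Rightarrow> 'k mat)"

fun path_map :: "nat \<Rightarrow> 'k::field rep \<Rightarrow> nat \<Rightarrow> nat \<Rightarrow> 'k mat" where
  "path_map r (d, A) i 0 = 1\<^sub>m (d i)"
| "path_map r (d, A) i (Suc m) = A ((i + m) mod r) * path_map r (d, A) i m"

definition tube_obj :: "nat \<Rightarrow> 'k::field rep \<Rightarrow> bool" where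
  "tube_obj r M \<longleftrightarrow>
     (\<forall>i<r. snd M i \<in> carrier_mat (fst M (Suc i mod r)) (fst M i)) \<and>
     (\<exists>N. \<forall>i<r. path_map r M i N = 0\<^sub>m (fst M i) (fst M i))"

text \<open>Families of matrices are encoded by their entries, F i a b, so that they form a
  vector space over 'k (pointwise operations).\<close>
definition scal :: "'k::field \<Rightarrow> (nat \<Rightarrow> nat \<Rightarrow> nat \<Rightarrow> 'k) \<Rightarrow> (nat \<Rightarrow> nat \<Rightarrow> nat \<Rightarrow> 'k)" where
  "scal c F = (\<lambda>i a b. c * F i a b)"

definition fam_mat :: "(nat \<Rightarrow> nat) \<Rightarrow> (nat \<Rightarrow> nat) \<Rightarrow> (nat \<Rightarrow> nat \<Rightarrow> nat \<Rightarrow> 'k) \<Rightarrow> nat \<Rightarrow> 'k mat" where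
  "fam_mat nr nc F i = mat (nr i) (nc i) (\<lambda>(a, b). F i a b)"

definition fam_entries :: "(nat \<Rightarrow> 'k::zero mat) \<Rightarrow> nat \<Rightarrow> nat \<Rightarrow> nat \<Rightarrow> 'k" where
  "fam_entries G = (\<lambda>i a b. if a < dim_row (G i) \<and> b < dim_col (G i) then G i $$ (a, b) else 0)"

definition fam_space :: "nat \<Rightarrow> (nat \<Rightarrow> nat) \<Rightarrow> (nat \<Rightarrow> nat) \<Rightarrow> (nat \<Rightarrow> nat \<Rightarrow> nat \<Rightarrow> 'k::zero) set" where
  "fam_space r nr nc =
     {F. \<forall>i a b. (r \<le> i \<or> nr i \<le> a \<or> nc i \<le> b) \<longrightarrow> F i a b = 0}"

text \<open>The k-linear map of the standard projective resolution:
  (f_i)_i |-> (B_i f_i - f_{i+1} A_i)_i.  Its kernel is Hom(M,N), its cokernel Ext^1(M,N).\<close>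
definition delta :: "nat \<Rightarrow> 'k::field rep \<Rightarrow> 'k rep \<Rightarrow> (nat \<Rightarrow> nat \<Rightarrow> nat \<Rightarrow> 'k) \<Rightarrow> (nat \<Rightarrow> nat \<Rightarrow> nat \<Rightarrow> 'k)" where
  "delta r M N F = fam_entries (\<lambda>i. if i < r then
       snd N i * fam_mat (fst N) (fst M) F i
       - fam_mat (fst N) (fst M) F (Suc i mod r) * snd M i
     else 0\<^sub>m 0 0)"

definition Hom_space :: "nat \<Rightarrow> 'k::field rep \<Rightarrow> 'k rep \<Rightarrow> (nat \<Rightarrow> nat \<Rightarrow> nat \<Rightarrow> 'k) set" where
  "Hom_space r M N = {F \<in> fam_space r (fst N) (fst M).
     \<forall>i<r. snd N i * fam_mat (fst N) (fst M) F i = fam_mat (fst N) (fst M) F (Suc i mod r) * snd M i}"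

definition dim_Hom :: "nat \<Rightarrow> 'k::field rep \<Rightarrow> 'k rep \<Rightarrow> nat" where
  "dim_Hom r M N = vector_space.dim (scal :: 'k \<Rightarrow> _) (Hom_space r M N)"

definition dim_Ext1 :: "nat \<Rightarrow> 'k::field rep \<Rightarrow> 'k rep \<Rightarrow> nat" where
  "dim_Ext1 r M N =
     vector_space.dim (scal :: 'k \<Rightarrow> _) (fam_space r (\<lambda>i. fst N (Suc i mod r)) (fst M))
     - vector_space.dim (scal :: 'k \<Rightarrow> _) (delta r M N ` fam_space r (fst N) (fst M))"

definition brick_set :: "nat \<Rightarrow> nat \<Rightarrow> (nat \<Rightarrow> 'k::field rep) \<Rightarrow> bool" where
  "brick_set r n M \<longleftrightarrow> (\<forall>i<n. tube_obj r (M i)) \<and>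
     (\<forall>i<n. \<forall>j<n. dim_Hom r (M i) (M j) = (if i = j then 1 else 0))"

text \<open>P^T C P for the permutation matrix P with P e_i = e_(sigma i) has (i,j)-entry
  C (sigma i) (sigma j).\<close>
definition reducible_mat :: "nat \<Rightarrow> (nat \<Rightarrow> nat \<Rightarrow> nat) \<Rightarrow> bool" where
  "reducible_mat n C \<longleftrightarrow>
     (n \<ge> 2 \<and> (\<exists>\<sigma> k. \<sigma> permutes {..<n} \<and> 0 < k \<and> k < n \<and>
        (\<forall>i j. k \<le> i \<and> i < n \<and> j < k \<longrightarrow> C (\<sigma> i) (\<sigma> j) = 0)))
     \<or> (n = 1 \<and> C 0 0 = 0)"

definition irreducible_mat :: "nat \<Rightarrow> (nat \<Rightarrow> nat \<Rightarrow> nat) \<Rightarrow> bool" where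
  "irreducible_mat n C \<longleftrightarrow> \<not> reducible_mat n C"

end

theory Submission
  imports Defs
begin


context vector_space begin
lemma rank_nullity_le:
  assumes lin: "Vector_Spaces.linear scale scale f" and S: "subspace S" and fin: "finite B0" "S \<subseteq> span B0"
  shows "dim S \<le> dim (S \<inter> {x. f x = 0}) + dim (f ` S)"
proof -
  interpret L: Vector_Spaces.linear scale scale f by (rule lin)
  let ?K = "S \<inter> {x. f x = 0}"
  obtain BK where BK: "BK \<subseteq> ?K" "independent BK" "?K \<subseteq> span BK" "card BK = dim ?K"
    using basis_exists by blast
  obtain B where B: "BK \<subseteq> B" "B \<subseteq> S" "independent B" "S \<subseteq> span B"
    using maximal_independent_subset_extend[of BK S] BK by auto
  have finB: "finite B" using independent_span_bound[OF fin(1) B(3)] B(2) fin(2) by auto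
  have cardB: "card B = dim S" using basis_card_eq_dim B by auto
  define R where "R = B - BK"
  have spanR: "span R \<subseteq> S" using span_minimal[of R S] S B(2) R_def by auto
  have inj: "inj_on f (span R)"
  proof (subst L.inj_on_iff_eq_0[OF subspace_span], intro ballI impI)
    fix x assume x: "x \<in> span R" "f x = 0"
    hence xK: "x \<in> span BK" using spanR BK(3) by auto
    have xB: "x \<in> span B" using xK span_mono[OF B(1)] by auto
    have r1: "representation B x = representation R x"
      using representation_extend[OF B(3) x(1)] R_def by auto
    have r2: "representation B x = representation BK x"
      using representation_extend[OF B(3) xK B(1)] .
    have "representation B x b = 0" for b
      using representation_ne_zero[of R x b] representation_ne_zero[of BK x b] r1 r2 R_def by auto
    then show "x = 0" using sum_nonzero_representation_eq[OF B(3) xB] by simp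
  qed
  have indR: "independent (f ` R)"
    using L.independent_injective_image[OF independent_mono[OF B(3)] inj] R_def by auto
  have injR: "inj_on f R" using inj span_superset inj_on_subset by blast
  obtain C where C: "C \<subseteq> f ` S" "independent C" "f ` S \<subseteq> span C" "card C = dim (f ` S)"
    using basis_exists by blast
  have "f ` S \<subseteq> span (f ` B)" using L.span_image B(4) by auto
  hence finC: "finite C" using independent_span_bound[of "f ` B" C] finB C by auto
  have "f ` R \<subseteq> span C" using C(3) B(2) R_def by auto
  hence "card (f ` R) \<le> card C" using independent_span_bound[OF finC indR] by auto
  hence "card R \<le> dim (f ` S)" using card_image[OF injR] C(4) by simp
  moreover have "card B = card BK + card R"
    using R_def finB B(1) by (metis card_Diff_subset card_mono le_add_diff_inverse finite_subset)
  ultimately show ?thesis using cardB BK(4) by simp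
qed
end

interpretation FS: vector_space "scal :: 'k::field \<Rightarrow> (nat\<Rightarrow>nat\<Rightarrow>nat\<Rightarrow>'k) \<Rightarrow> _"
  by unfold_locales (auto simp: scal_def fun_eq_iff algebra_simps)


lemma fsum_apply: "(sum f A) i a b = (\<Sum>x\<in>A. f x i a b)"
  by (induction A rule: infinite_finite_induct) auto

definition ebas :: "nat \<Rightarrow> nat \<Rightarrow> nat \<Rightarrow> (nat \<Rightarrow> nat \<Rightarrow> nat \<Rightarrow> 'k::field)" where
  "ebas i a b = (\<lambda>i' a' b'. if i' = i \<and> a' = a \<and> b' = b then 1 else 0)"

definition eidx :: "nat \<Rightarrow> (nat \<Rightarrow> nat) \<Rightarrow> (nat \<Rightarrow> nat) \<Rightarrow> (nat \<times> nat \<times> nat) set" where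
  "eidx r nr nc = (SIGMA i:{..<r}. {..<nr i} \<times> {..<nc i})"

definition ebset :: "nat \<Rightarrow> (nat \<Rightarrow> nat) \<Rightarrow> (nat \<Rightarrow> nat) \<Rightarrow> (nat \<Rightarrow> nat \<Rightarrow> nat \<Rightarrow> 'k::field) set" where
  "ebset r nr nc = (\<lambda>(i,a,b). ebas i a b) ` eidx r nr nc"

lemma ebas_inj: "inj (\<lambda>(i,a,b). (ebas i a b :: nat \<Rightarrow> nat \<Rightarrow> nat \<Rightarrow> 'k::field))"
proof (rule injI)
  fix x y :: "nat \<times> nat \<times> nat"
  assume "(\<lambda>(i,a,b). (ebas i a b :: nat \<Rightarrow> nat \<Rightarrow> nat \<Rightarrow> 'k)) x = (\<lambda>(i,a,b). ebas i a b) y"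
  then show "x = y"
    by (cases x; cases y) (auto simp: ebas_def fun_eq_iff split: if_splits)
qed

lemma finite_eidx: "finite (eidx r nr nc)" by (auto simp: eidx_def)

lemma card_ebset: "card (ebset r nr nc :: (nat \<Rightarrow> nat \<Rightarrow> nat \<Rightarrow> 'k::field) set) = (\<Sum>i<r. nr i * nc i)"
proof -
  have "card (ebset r nr nc :: (nat \<Rightarrow> nat \<Rightarrow> nat \<Rightarrow> 'k) set) = card (eidx r nr nc)"
    unfolding ebset_def by (rule card_image, rule inj_on_subset[OF ebas_inj]) auto
  also have "\<dots> = (\<Sum>i<r. nr i * nc i)" unfolding eidx_def by (simp add: card_SigmaI)
  finally show ?thesis .
qed

lemma finite_ebset: "finite (ebset r nr nc)" unfolding ebset_def using finite_eidx by auto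

lemma ebset_sub: "ebset r nr nc \<subseteq> fam_space r nr nc"
  by (auto simp: ebset_def eidx_def fam_space_def ebas_def)

lemma ebset_indep: "FS.independent (ebset r nr nc :: (nat \<Rightarrow> nat \<Rightarrow> nat \<Rightarrow> 'k::field) set)"
proof (rule FS.independent_if_scalars_zero[OF finite_ebset])
  fix g :: "_ \<Rightarrow> 'k" and x :: "nat \<Rightarrow> nat \<Rightarrow> nat \<Rightarrow> 'k"
  assume s: "(\<Sum>x\<in>ebset r nr nc. scal (g x) x) = 0" and x: "x \<in> ebset r nr nc"
  then obtain i a b where xe: "x = ebas i a b" by (auto simp: ebset_def)
  have "0 = (\<Sum>y\<in>ebset r nr nc. scal (g y) y) i a b" using s by simp
  also have "\<dots> = (\<Sum>y\<in>ebset r nr nc. g y * y i a b)" by (simp add: fsum_apply scal_def)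
  also have "\<dots> = (\<Sum>y\<in>ebset r nr nc. if y = x then g y else 0)"
  proof (rule sum.cong[OF refl])
    fix y :: "nat \<Rightarrow> nat \<Rightarrow> nat \<Rightarrow> 'k" assume "y \<in> ebset r nr nc"
    then obtain i' a' b' where ye: "y = ebas i' a' b'" by (auto simp: ebset_def)
    show "g y * y i a b = (if y = x then g y else 0)"
      using ye xe by (auto simp: ebas_def fun_eq_iff)
  qed
  also have "\<dots> = g x" by (subst sum.delta[OF finite_ebset]) (simp add: x)
  finally show "g x = 0" by simp
qed

lemma fam_space_span: "fam_space r nr nc \<subseteq> FS.span (ebset r nr nc :: (nat \<Rightarrow> nat \<Rightarrow> nat \<Rightarrow> 'k::field) set)"
proof
  fix F :: "nat \<Rightarrow> nat \<Rightarrow> nat \<Rightarrow> 'k" assume F: "F \<in> fam_space r nr nc"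
  have "F = (\<Sum>p\<in>eidx r nr nc. scal (F (fst p) (fst (snd p)) (snd (snd p))) (ebas (fst p) (fst (snd p)) (snd (snd p))))"
    (is "F = ?S")
  proof (intro ext)
    fix i a b
    have "?S i a b = (\<Sum>p\<in>eidx r nr nc. if p = (i,a,b) then F i a b else 0)"
      unfolding fsum_apply by (rule sum.cong) (auto simp: scal_def ebas_def)
    also have "\<dots> = F i a b"
      using F finite_eidx[of r nr nc] by (auto simp: eidx_def fam_space_def)
    finally show "F i a b = ?S i a b" by simp
  qed
  also have "\<dots> \<in> FS.span (ebset r nr nc)"
    by (intro FS.span_sum FS.span_scale FS.span_base) (force simp: ebset_def image_iff)
  finally show "F \<in> FS.span (ebset r nr nc)" .
qed

lemma dim_fam_space: "FS.dim (fam_space r nr nc :: (nat \<Rightarrow> nat \<Rightarrow> nat \<Rightarrow> 'k::field) set) = (\<Sum>i<r. nr i * nc i)"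
  using FS.dim_unique[OF ebset_sub fam_space_span ebset_indep card_ebset] .


lemma tube_carrier:
  assumes "tube_obj r M" "i < r"
  shows "snd M i \<in> carrier_mat (fst M (Suc i mod r)) (fst M i)"
  using assms by (auto simp: tube_obj_def)

lemma prod1_entry:
  assumes "tube_obj r N" "i < r" "a < fst N (Suc i mod r)" "b < fst M i"
  shows "(snd N i * fam_mat (fst N) (fst M) F i) $$ (a,b) = (\<Sum>c<fst N i. snd N i $$ (a,c) * F i c b)"
  using tube_carrier[OF assms(1,2)] assms(3,4)
  by (auto simp: fam_mat_def scalar_prod_def atLeast0LessThan intro!: sum.cong)

lemma prod2_entry:
  assumes "tube_obj r M" "i < r" "a < fst N (Suc i mod r)" "b < fst M i"
  shows "(fam_mat (fst N) (fst M) F (Suc i mod r) * snd M i) $$ (a,b)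
     = (\<Sum>c<fst M (Suc i mod r). F (Suc i mod r) a c * snd M i $$ (c,b))"
  using tube_carrier[OF assms(1,2)] assms(3,4)
  by (auto simp: fam_mat_def scalar_prod_def atLeast0LessThan intro!: sum.cong)

lemma delta_formula:
  assumes "tube_obj r M" "tube_obj r N"
  shows "delta r M N F i a b = (if i < r \<and> a < fst N (Suc i mod r) \<and> b < fst M i then
     (\<Sum>c<fst N i. snd N i $$ (a,c) * F i c b) - (\<Sum>c<fst M (Suc i mod r). F (Suc i mod r) a c * snd M i $$ (c,b))
     else 0)"
proof (cases "i < r")
  case True
  note c1 = tube_carrier[OF assms(1) True] and c2 = tube_carrier[OF assms(2) True]
  show ?thesis
    using c1 c2 True prod1_entry[OF assms(2) True, where M=M and F=F] prod2_entry[OF assms(1) True, where N=N and F=F]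
    by (auto simp: delta_def fam_entries_def fam_mat_def)
qed (auto simp: delta_def fam_entries_def)

lemma delta_linear:
  assumes "tube_obj r M" "tube_obj r N"
  shows "Vector_Spaces.linear scal scal (delta r M N)"
  unfolding Vector_Spaces.linear_iff
proof (intro conjI allI)
  show "vector_space (scal :: 'a \<Rightarrow> _)" by (rule FS.vector_space_axioms)
  show "vector_space (scal :: 'a \<Rightarrow> _)" by (rule FS.vector_space_axioms)
  fix x y :: "nat \<Rightarrow> nat \<Rightarrow> nat \<Rightarrow> 'a"
  show "delta r M N (x + y) = delta r M N x + delta r M N y"
    by (intro ext) (simp add: delta_formula[OF assms] sum.distrib algebra_simps)
  fix c :: 'a
  show "delta r M N (scal c x) = scal c (delta r M N x)"
    by (intro ext) (simp add: delta_formula[OF assms] scal_def sum_distrib_left algebra_simps)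
qed

lemma Hom_space_ker:
  assumes "tube_obj r M" "tube_obj r N"
  shows "Hom_space r M N = fam_space r (fst N) (fst M) \<inter> {F. delta r M N F = 0}"
proof -
  have "(\<forall>i<r. snd N i * fam_mat (fst N) (fst M) F i = fam_mat (fst N) (fst M) F (Suc i mod r) * snd M i)
        \<longleftrightarrow> delta r M N F = 0" for F
  proof -
    have E: "(snd N i * fam_mat (fst N) (fst M) F i = fam_mat (fst N) (fst M) F (Suc i mod r) * snd M i)
       \<longleftrightarrow> (\<forall>a b. delta r M N F i a b = 0)" if i: "i < r" for i
      using tube_carrier[OF assms(1) i] tube_carrier[OF assms(2) i] i
        prod1_entry[OF assms(2) i, where M=M and F=F] prod2_entry[OF assms(1) i, where N=N and F=F]
      by (auto simp: mat_eq_iff delta_formula[OF assms] fam_mat_def)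
    have Z: "delta r M N F i a b = 0" if "\<not> i < r" for i a b
      using that by (simp add: delta_formula[OF assms])
    show ?thesis
    proof
      assume H: "\<forall>i<r. snd N i * fam_mat (fst N) (fst M) F i = fam_mat (fst N) (fst M) F (Suc i mod r) * snd M i"
      show "delta r M N F = 0"
      proof (intro ext)
        fix i a b show "delta r M N F i a b = 0 i a b"
          using H E Z by (cases "i < r") auto
      qed
    next
      assume "delta r M N F = 0"
      then show "\<forall>i<r. snd N i * fam_mat (fst N) (fst M) F i = fam_mat (fst N) (fst M) F (Suc i mod r) * snd M i"
        using E by auto
    qed
  qed
  then show ?thesis by (auto simp: Hom_space_def)
qed

lemma fam_space_subspace: "FS.subspace (fam_space r nr nc)"
  by (auto simp: FS.subspace_def fam_space_def scal_def)

lemma delta_image: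
  assumes "tube_obj r M" "tube_obj r N"
  shows "delta r M N ` X \<subseteq> fam_space r (\<lambda>i. fst N (Suc i mod r)) (fst M)"
  by (auto simp: fam_space_def delta_formula[OF assms])

lemma ext_bound:
  assumes "tube_obj r M" "tube_obj r N"
  shows "int (dim_Ext1 r M N) \<le> int (dim_Hom r M N) + int (\<Sum>k<r. fst N (Suc k mod r) * fst M k)
           - int (\<Sum>k<r. fst N k * fst M k)"
proof -
  define S :: "(nat \<Rightarrow> nat \<Rightarrow> nat \<Rightarrow> 'a) set" where "S = fam_space r (fst N) (fst M)"
  define T :: "(nat \<Rightarrow> nat \<Rightarrow> nat \<Rightarrow> 'a) set" where "T = fam_space r (\<lambda>i. fst N (Suc i mod r)) (fst M)"
  have rn: "FS.dim S \<le> FS.dim (S \<inter> {x. delta r M N x = 0}) + FS.dim (delta r M N ` S)"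
    unfolding S_def
    by (rule FS.rank_nullity_le[OF delta_linear[OF assms] fam_space_subspace finite_ebset fam_space_span])
  have "delta r M N ` S \<subseteq> FS.span (ebset r (\<lambda>i. fst N (Suc i mod r)) (fst M))"
    using delta_image[OF assms] fam_space_span by blast
  hence "FS.dim (delta r M N ` S) \<le> card (ebset r (\<lambda>i. fst N (Suc i mod r)) (fst M) :: (nat \<Rightarrow> nat \<Rightarrow> nat \<Rightarrow> 'a) set)"
    by (rule FS.dim_le_card[OF _ finite_ebset])
  hence imT: "FS.dim (delta r M N ` S) \<le> FS.dim T"
    unfolding card_ebset T_def dim_fam_space .
  have "FS.dim (S \<inter> {x. delta r M N x = 0}) = dim_Hom r M N"
    unfolding dim_Hom_def Hom_space_ker[OF assms] S_def ..
  moreover have "dim_Ext1 r M N = FS.dim T - FS.dim (delta r M N ` S)"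
    unfolding dim_Ext1_def S_def T_def ..
  moreover have "FS.dim S = (\<Sum>k<r. fst N k * fst M k)" unfolding S_def dim_fam_space ..
  moreover have "FS.dim T = (\<Sum>k<r. fst N (Suc k mod r) * fst M k)" unfolding T_def dim_fam_space ..
  ultimately show ?thesis using rn imT by linarith
qed



lemma triple_swap:
  fixes f g :: "nat \<Rightarrow> nat \<Rightarrow> int"
  shows "(\<Sum>i<n. \<Sum>j<n. \<Sum>k<r. f j k * g i k) = (\<Sum>k<r. (\<Sum>j<n. f j k) * (\<Sum>i<n. g i k))"
proof -
  have "(\<Sum>i<n. \<Sum>j<n. \<Sum>k<r. f j k * g i k) = (\<Sum>i<n. \<Sum>k<r. \<Sum>j<n. f j k * g i k)"
    by (rule sum.cong[OF refl], rule sum.swap)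
  also have "\<dots> = (\<Sum>k<r. \<Sum>i<n. \<Sum>j<n. f j k * g i k)" by (rule sum.swap)
  also have "\<dots> = (\<Sum>k<r. (\<Sum>j<n. f j k) * (\<Sum>i<n. g i k))"
    unfolding sum_product by (rule sum.cong[OF refl], rule sum.swap)
  finally show ?thesis .
qed

lemma cyc_shift_sum:
  fixes g :: "nat \<Rightarrow> int"
  assumes "r \<ge> 1"
  shows "(\<Sum>k<r. g (Suc k mod r)) = (\<Sum>k<r. g k)"
proof -
  obtain m where m: "r = Suc m" using assms by (cases r) auto
  have "(\<Sum>k<Suc m. g (Suc k mod Suc m)) = (\<Sum>k<m. g (Suc k mod Suc m)) + g (Suc m mod Suc m)"
    by simp
  also have "(\<Sum>k<m. g (Suc k mod Suc m)) = (\<Sum>k<m. g (Suc k))"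
    by (rule sum.cong) auto
  finally have "(\<Sum>k<Suc m. g (Suc k mod Suc m)) = (\<Sum>k<m. g (Suc k)) + g 0" by simp
  also have "\<dots> = (\<Sum>k<Suc m. g k)" by (subst sum.lessThan_Suc_shift) simp
  finally show ?thesis using m by simp
qed

lemma cyc_quad:
  fixes D :: "nat \<Rightarrow> int"
  assumes "r \<ge> 1"
  shows "(\<Sum>k<r. D (Suc k mod r) * D k) \<le> (\<Sum>k<r. D k * D k)"
proof -
  have "2 * (\<Sum>k<r. D (Suc k mod r) * D k) \<le> (\<Sum>k<r. D (Suc k mod r) * D (Suc k mod r) + D k * D k)"
    unfolding sum_distrib_left
  proof (rule sum_mono)
    fix k
    have "0 \<le> (D (Suc k mod r) - D k) * (D (Suc k mod r) - D k)" by simp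
    then show "2 * (D (Suc k mod r) * D k) \<le> D (Suc k mod r) * D (Suc k mod r) + D k * D k"
      by (simp add: algebra_simps)
  qed
  also have "\<dots> = 2 * (\<Sum>k<r. D k * D k)"
    using cyc_shift_sum[OF assms, of "\<lambda>k. D k * D k"] by (simp add: sum.distrib)
  finally show ?thesis by simp
qed

lemma total_bound:
  fixes M :: "nat \<Rightarrow> 'k::field rep"
  assumes r: "r \<ge> 1" and bs: "brick_set r n M"
  shows "(\<Sum>i<n. \<Sum>j<n. dim_Ext1 r (M i) (M j)) \<le> n"
proof -
  define d where "d i k = int (fst (M i) k)" for i k
  define D where "D k = (\<Sum>i<n. d i k)" for k
  have tb: "tube_obj r (M i)" if "i < n" for i using bs that by (auto simp: brick_set_def)
  have H: "dim_Hom r (M i) (M j) = (if i = j then 1 else 0)" if "i < n" "j < n" for i j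
    using bs that by (auto simp: brick_set_def)
  have "int (\<Sum>i<n. \<Sum>j<n. dim_Ext1 r (M i) (M j)) = (\<Sum>i<n. \<Sum>j<n. int (dim_Ext1 r (M i) (M j)))"
    by simp
  also have "\<dots> \<le> (\<Sum>i<n. \<Sum>j<n. (if i = j then 1 else 0) + (\<Sum>k<r. d j (Suc k mod r) * d i k)
           - (\<Sum>k<r. d j k * d i k))"
  proof (intro sum_mono)
    fix i j assume "i \<in> {..<n}" "j \<in> {..<n}"
    then show "int (dim_Ext1 r (M i) (M j)) \<le> (if i = j then 1 else 0) + (\<Sum>k<r. d j (Suc k mod r) * d i k)
           - (\<Sum>k<r. d j k * d i k)"
      using ext_bound[OF tb tb, of i j] H[of i j] by (cases "i = j") (auto simp: d_def)
  qed
  also have "\<dots> = (\<Sum>i<n. \<Sum>j<n. (if i = j then 1 else 0)) + (\<Sum>i<n. \<Sum>j<n. \<Sum>k<r. d j (Suc k mod r) * d i k)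
           - (\<Sum>i<n. \<Sum>j<n. \<Sum>k<r. d j k * d i k)"
    by (simp add: sum.distrib sum_subtractf)
  also have "\<dots> = int n + (\<Sum>k<r. D (Suc k mod r) * D k) - (\<Sum>k<r. D k * D k)"
    unfolding triple_swap D_def by simp
  also have "\<dots> \<le> int n" using cyc_quad[OF r, of D] by simp
  finally show ?thesis by (simp only: of_nat_le_iff)
qed



lemma reducible_from_subset:
  fixes C :: "nat \<Rightarrow> nat \<Rightarrow> nat"
  assumes n2: "2 \<le> n" and T: "T \<subseteq> {..<n}" "T \<noteq> {}" "T \<noteq> {..<n}"
    and Z: "\<And>u t. u < n \<Longrightarrow> u \<notin> T \<Longrightarrow> t \<in> T \<Longrightarrow> C u t = 0"
  shows "reducible_mat n C"
proof -
  define k where "k = card T"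
  define U where "U = {..<n} - T"
  have finT: "finite T" using T finite_subset by blast
  have k0: "0 < k" unfolding k_def using finT T(2) by (simp add: card_gt_0_iff)
  have "card T < card {..<n}" by (rule psubset_card_mono) (use T in auto)
  hence kn: "k < n" unfolding k_def by simp
  have finU: "finite U" by (simp add: U_def)
  have cardU: "card U = n - k" unfolding U_def k_def using T(1) finT by (simp add: card_Diff_subset)
  obtain h1 where h1: "bij_betw h1 {0..<k} T" using ex_bij_betw_nat_finite[OF finT] k_def by auto
  obtain h2 where h2: "bij_betw h2 {0..<n-k} U" using ex_bij_betw_nat_finite[OF finU] cardU by auto
  define \<sigma> where "\<sigma> x = (if x < k then h1 x else if x < n then h2 (x - k) else x)" for x
  have im1: "\<sigma> ` {..<k} = T"
  proof -
    have "\<sigma> ` {..<k} = h1 ` {0..<k}" by (rule image_cong) (auto simp: \<sigma>_def)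
    then show ?thesis using h1 by (simp add: bij_betw_def)
  qed
  have im2: "\<sigma> ` {k..<n} = U"
  proof
    show "\<sigma> ` {k..<n} \<subseteq> U"
    proof
      fix y assume "y \<in> \<sigma> ` {k..<n}"
      then obtain x where x: "k \<le> x" "x < n" "y = \<sigma> x" by auto
      then have "y = h2 (x - k)" "x - k \<in> {0..<n-k}" by (auto simp: \<sigma>_def)
      then show "y \<in> U" using h2 by (auto simp: bij_betw_def)
    qed
  next
    show "U \<subseteq> \<sigma> ` {k..<n}"
    proof
      fix y assume "y \<in> U"
      then obtain z where z: "z < n - k" "y = h2 z" using h2 by (auto simp: bij_betw_def image_def)
      then have "\<sigma> (z + k) = y" by (auto simp: \<sigma>_def)
      moreover have "z + k \<in> {k..<n}" using z by auto
      ultimately show "y \<in> \<sigma> ` {k..<n}" by force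
    qed
  qed
  have "{..<n} = {..<k} \<union> {k..<n}" using kn by auto
  hence "\<sigma> ` {..<n} = \<sigma> ` {..<k} \<union> \<sigma> ` {k..<n}" by (metis image_Un)
  also have "\<dots> = T \<union> U" using im1 im2 by simp
  also have "\<dots> = {..<n}" using T(1) unfolding U_def by blast
  finally have imall: "\<sigma> ` {..<n} = {..<n}" .
  have inj: "inj_on \<sigma> {..<n}" by (rule eq_card_imp_inj_on) (simp_all add: imall)
  have perm: "\<sigma> permutes {..<n}"
  proof (rule bij_imp_permutes)
    show "bij_betw \<sigma> {..<n} {..<n}" by (simp add: bij_betw_def inj imall)
    fix x assume "x \<notin> {..<n}" then show "\<sigma> x = x" using kn by (simp add: \<sigma>_def)
  qed
  have "C (\<sigma> i) (\<sigma> j) = 0" if "k \<le> i" "i < n" "j < k" for i j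
  proof -
    have "\<sigma> i \<in> U" using im2 that by auto
    moreover have "\<sigma> j \<in> T" using im1 that by auto
    ultimately show ?thesis using Z U_def by auto
  qed
  then show ?thesis unfolding reducible_mat_def using n2 perm k0 kn by blast
qed

lemma rows_one:
  fixes R :: "nat \<Rightarrow> nat"
  assumes "\<And>i. i < n \<Longrightarrow> 1 \<le> R i" "(\<Sum>i<n. R i) \<le> n" "i0 < n"
  shows "R i0 = 1"
proof (rule ccontr)
  assume "R i0 \<noteq> 1"
  hence "2 \<le> R i0" using assms(1)[OF assms(3)] by auto
  moreover have "(\<Sum>i\<in>{..<n}-{i0}. 1) \<le> (\<Sum>i\<in>{..<n}-{i0}. R i)"
    by (rule sum_mono) (use assms(1) in auto)
  moreover have "(\<Sum>i<n. R i) = R i0 + (\<Sum>i\<in>{..<n}-{i0}. R i)"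
    using assms(3) by (simp add: sum.remove)
  moreover have "(\<Sum>i\<in>{..<n}-{i0}. (1::nat)) = n - 1" using assms(3) by simp
  ultimately show False using assms(2,3) by linarith
qed

lemma comb:
  fixes C :: "nat \<Rightarrow> nat \<Rightarrow> nat"
  assumes sumle: "(\<Sum>i<n. \<Sum>j<n. C i j) \<le> n" and irr: "irreducible_mat n C"
  shows "\<exists>\<sigma>. \<sigma> permutes {..<n} \<and> (\<forall>i<n. \<forall>j<n. C (\<sigma> i) (\<sigma> j) = (if j = Suc i mod n then 1 else 0))"
proof -
  consider "n = 0" | "n = 1" | "2 \<le> n" by linarith
  then show ?thesis
  proof cases
    case 1 then show ?thesis by (intro exI[of _ id]) (auto simp: permutes_id)
  next
    case 2
    then have "C 0 0 \<noteq> 0" using irr by (auto simp: irreducible_mat_def reducible_mat_def)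
    moreover have "C 0 0 \<le> 1" using sumle 2 by simp
    ultimately show ?thesis using 2 by (intro exI[of _ id]) (auto simp: permutes_id)
  next
    case 3
    have nred: "\<not> reducible_mat n C" using irr by (simp add: irreducible_mat_def)
    have out: "\<exists>j<n. C i j > 0" if i: "i < n" for i
    proof (rule ccontr)
      assume "\<not> ?thesis"
      hence z: "\<forall>j<n. C i j = 0" by auto
      have "\<exists>a. a < n \<and> a \<noteq> i"
      proof (cases "i = 0")
        case True then show ?thesis using 3 by (intro exI[of _ 1]) auto
      next
        case False then show ?thesis using 3 by (intro exI[of _ 0]) auto
      qed
      then obtain a where a: "a < n" "a \<noteq> i" by blast
      have "reducible_mat n C"
      proof (rule reducible_from_subset[OF 3, of "{..<n} - {i}"])
        show "{..<n} - {i} \<noteq> {}" using a by blast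
        show "{..<n} - {i} \<noteq> {..<n}" using i by blast
        fix u t assume "u < n" "u \<notin> {..<n} - {i}" "t \<in> {..<n} - {i}"
        then have "u = i" "t < n" by auto
        then show "C u t = 0" using z by simp
      qed blast
      then show False using nred by simp
    qed
    have inn: "\<exists>i<n. C i j > 0" if j: "j < n" for j
    proof (rule ccontr)
      assume "\<not> ?thesis"
      hence z: "\<forall>i<n. C i j = 0" by auto
      have "reducible_mat n C"
      proof (rule reducible_from_subset[OF 3, of "{j}"])
        show "{j} \<subseteq> {..<n}" using j by blast
        show "{j} \<noteq> {..<n}" using 3 by (metis One_nat_def lessThan_iff less_2_cases_iff numeral_le_iff
            one_le_numeral singletonD zero_neq_one less_le_trans not_less)
        fix u t assume "u < n" "u \<notin> {j}" "t \<in> {j}"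
        then show "C u t = 0" using z by simp
      qed blast
      then show False using nred by simp
    qed
    define f where "f i = (SOME j. j < n \<and> C i j > 0)" for i
    have f: "f i < n \<and> C i (f i) > 0" if "i < n" for i
      using someI_ex[OF out[OF that]] unfolding f_def .
    have R1: "(\<Sum>j<n. C i j) = 1" if i: "i < n" for i
    proof (rule rows_one[where R = "\<lambda>i. \<Sum>j<n. C i j"])
      fix i assume "i < n"
      then have "C i (f i) \<le> (\<Sum>j<n. C i j)" using f by (intro member_le_sum) auto
      then show "1 \<le> (\<Sum>j<n. C i j)" using f[OF \<open>i<n\<close>] by linarith
    qed (use sumle i in auto)
    have Cf: "C i j = (if j = f i then 1 else 0)" if i: "i < n" and j: "j < n" for i j
    proof -
      have "(\<Sum>j<n. C i j) = C i (f i) + (\<Sum>j\<in>{..<n}-{f i}. C i j)"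
        using f[OF i] by (simp add: sum.remove)
      then have "C i (f i) = 1" "(\<Sum>j\<in>{..<n}-{f i}. C i j) = 0" using R1[OF i] f[OF i] by linarith+
      then show ?thesis using j by auto
    qed
    have fim: "f ` {..<n} = {..<n}"
    proof
      show "f ` {..<n} \<subseteq> {..<n}" using f by auto
      show "{..<n} \<subseteq> f ` {..<n}"
      proof
        fix t assume t: "t \<in> {..<n}"
        then obtain i where "i < n" "C i t > 0" using inn by auto
        then have "t = f i" using Cf[of i t] t by (auto split: if_splits)
        then show "t \<in> f ` {..<n}" using \<open>i < n\<close> by auto
      qed
    qed
    have injf: "inj_on f {..<n}" by (rule eq_card_imp_inj_on) (simp_all add: fim)
    have orb_in: "(f ^^ m) 0 < n" for m
    proof (induction m)
      case 0 show ?case using 3 by simp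
    next
      case (Suc m) show ?case using f[OF Suc.IH] by simp
    qed
    define T where "T = range (\<lambda>m. (f ^^ m) 0)"
    have Tall: "T = {..<n}"
    proof (rule ccontr)
      assume ne: "T \<noteq> {..<n}"
      have Tsub: "T \<subseteq> {..<n}" using orb_in T_def by auto
      have "reducible_mat n C"
      proof (rule reducible_from_subset[OF 3, of "{..<n} - T"])
        show "{..<n} - T \<noteq> {}" using ne Tsub by blast
        have "0 \<in> T" unfolding T_def by (rule range_eqI[where x=0]) simp
        moreover have "0 \<in> {..<n}" using 3 by simp
        ultimately show "{..<n} - T \<noteq> {..<n}" by blast
        fix u t assume u: "u < n" "u \<notin> {..<n} - T" and t: "t \<in> {..<n} - T"
        then obtain m where m: "u = (f ^^ m) 0" unfolding T_def by blast
        have "f u \<in> T" unfolding T_def by (rule range_eqI[where x="Suc m"]) (simp add: m)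
        then have "t \<noteq> f u" using t by blast
        moreover have "t < n" using t by blast
        ultimately show "C u t = 0" using Cf[of u t] u by simp
      qed blast
      then show False using nred by simp
    qed
    have dist: "(f ^^ i) 0 \<noteq> (f ^^ j) 0" if ij: "i < j" "j < n" for i j
    proof
      assume eq: "(f ^^ i) 0 = (f ^^ j) 0"
      have allin: "(f ^^ m) 0 \<in> (\<lambda>m. (f ^^ m) 0) ` {..<j}" for m
      proof (induction m rule: less_induct)
        case (less m)
        show ?case
        proof (cases "m < j")
          case True then show ?thesis by auto
        next
          case False
          have "(f ^^ m) 0 = (f ^^ (m - j)) ((f ^^ j) 0)"
            using False by (metis funpow_add le_add_diff_inverse2 not_less comp_apply)
          also have "\<dots> = (f ^^ (m - j)) ((f ^^ i) 0)" using eq by simp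
          also have "\<dots> = (f ^^ (m - j + i)) 0" by (simp add: funpow_add)
          finally show ?thesis using less[of "m - j + i"] False ij by auto
        qed
      qed
      have "{..<n} \<subseteq> (\<lambda>m. (f ^^ m) 0) ` {..<j}"
      proof
        fix x assume "x \<in> {..<n}"
        then have "x \<in> T" using Tall by blast
        then obtain m where "x = (f ^^ m) 0" unfolding T_def by blast
        then show "x \<in> (\<lambda>m. (f ^^ m) 0) ` {..<j}" using allin by simp
      qed
      then have "card {..<n} \<le> card ((\<lambda>m. (f ^^ m) 0) ` {..<j})" by (intro card_mono) auto
      also have "\<dots> \<le> j" using card_image_le[of "{..<j}" "\<lambda>m. (f ^^ m) 0"] by simp
      finally show False using ij by simp
    qed
    define \<sigma> where "\<sigma> x = (if x < n then (f ^^ x) 0 else x)" for x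
    have injs: "inj_on \<sigma> {..<n}"
      unfolding inj_on_def \<sigma>_def using dist by (metis lessThan_iff nat_neq_iff)
    have "\<sigma> ` {..<n} \<subseteq> {..<n}"
    proof
      fix y assume "y \<in> \<sigma> ` {..<n}"
      then obtain x where "x < n" "y = \<sigma> x" by blast
      then show "y \<in> {..<n}" using orb_in[of x] by (simp add: \<sigma>_def)
    qed
    then have ims: "\<sigma> ` {..<n} = {..<n}" using endo_inj_surj[OF finite_lessThan _ injs] by blast
    have perm: "\<sigma> permutes {..<n}"
    proof (rule bij_imp_permutes)
      show "bij_betw \<sigma> {..<n} {..<n}" by (simp add: bij_betw_def injs ims)
      fix x assume "x \<notin> {..<n}" then show "\<sigma> x = x" by (simp add: \<sigma>_def)
    qed
    have fn: "(f ^^ n) 0 = 0"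
    proof -
      have "(f ^^ n) 0 \<in> \<sigma> ` {..<n}" using ims orb_in[of n] by simp
      then obtain k where k0: "k < n" "(f ^^ n) 0 = \<sigma> k" by blast
      then have k: "k < n" "(f ^^ n) 0 = (f ^^ k) 0" by (simp_all add: \<sigma>_def)
      show ?thesis
      proof (cases k)
        case 0 then show ?thesis using k by simp
      next
        case (Suc k')
        obtain n' where n': "n = Suc n'" using 3 by (cases n) auto
        have "f ((f ^^ n') 0) = f ((f ^^ k') 0)" using k Suc n' by simp
        then have "(f ^^ n') 0 = (f ^^ k') 0" using injf orb_in by (auto simp: inj_on_def)
        then show ?thesis using dist[of k' n'] k Suc n' by auto
      qed
    qed
    have "C (\<sigma> i) (\<sigma> j) = (if j = Suc i mod n then 1 else 0)" if i: "i < n" and j: "j < n" for i j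
    proof -
      have "C (\<sigma> i) (\<sigma> j) = (if \<sigma> j = f (\<sigma> i) then 1 else 0)"
        using Cf[of "\<sigma> i" "\<sigma> j"] i j orb_in by (simp add: \<sigma>_def)
      also have "f (\<sigma> i) = \<sigma> (Suc i mod n)"
      proof (cases "Suc i < n")
        case True then show ?thesis using i by (simp add: \<sigma>_def)
      next
        case False then have "Suc i = n" using i by simp
        then show ?thesis using fn 3 by (auto simp: \<sigma>_def)
      qed
      also have "(\<sigma> j = \<sigma> (Suc i mod n)) \<longleftrightarrow> j = Suc i mod n"
        using injs j 3 by (auto simp: inj_on_def)
      finally show ?thesis .
    qed
    then show ?thesis using perm by blast
  qed
qed


theorem lemma5p1:
  fixes r n :: nat and M :: "nat \<Rightarrow> 'k::alg_closed_field rep"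
  assumes "r \<ge> 1"
    and "brick_set r n M"
    and "irreducible_mat n (\<lambda>i j. dim_Ext1 r (M i) (M j))"
  shows "\<exists>\<sigma>. \<sigma> permutes {..<n} \<and>
           (\<forall>i<n. \<forall>j<n. dim_Ext1 r (M (\<sigma> i)) (M (\<sigma> j)) = (if j = Suc i mod n then 1 else 0))"
proof -
  have "(\<Sum>i<n. \<Sum>j<n. dim_Ext1 r (M i) (M j)) \<le> n" by (rule total_bound[OF assms(1,2)])
  then show ?thesis by (rule comb[OF _ assms(3)])
qed

end
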